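(* Let $n\ge 3$ and let $f\colon (0,4]\to\mathbb R$ be a differentiable, decreasing, and convex function. Then the vertices of a regular simplex inscribed in the unit sphere $\mathbb S^{n-2}\subset\mathbb R^{n-1}$ (i.e. $n$ points with $\langle \mathbf x_i,\mathbf x_j\rangle=-\frac{1}{n-1}$ for all $i\neq j$) attain the minimum of the largest eigenvalue $\lambda_n(L^{\mathbf x})$ of the graph Laplacian $L^{\mathbf x}$ over all configurations $\{\mathbf x_i\}_{i=1}^n$ of $n$ distinct points on $\mathbb S^{n-2}$.
   Context: For points $\mathbf x_1,\dots,\mathbf x_n\in\mathbb S^{n-2}$, the weighted adjacency matrix $W^{\mathbf x}$ is the $n\times n$ matrix with $W^{\mathbf x}_{ij}=f(|\mathbf x_i-\mathbf x_j|^2)$ for $i\ne j$ (Euclidean distance) and $W^{\mathbf x}_{ii}=0$. Let $D^{\mathbf x}$ be diagonal with $D^{\mathbf x}_{ii}=\sum_j W^{\mathbf x}_{ij}$; the graph Laplacian is $L^{\mathbf x}=D^{\mathbf x}-W^{\mathbf x}$, with eigenvalues $\lambda_1(L^{\mathbf x})\le\dots\le\lambda_n(L^{\mathbf x})$, so $\lambda_n(L^{\mathbf x})=\max_{\|v\|=1}\langle v,L^{\mathbf x}v\rangle$. *)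

theory Defs
  imports "HOL-Analysis.Analysis"
begin

definition weight_matrix :: "(real \<Rightarrow> real) \<Rightarrow> ('n::finite \<Rightarrow> real^'d) \<Rightarrow> real^'n^'n" where
  "weight_matrix f x = (\<chi> i j. if i = j then 0 else f ((norm (x i - x j))\<^sup>2))"

definition degree_matrix :: "(real \<Rightarrow> real) \<Rightarrow> ('n::finite \<Rightarrow> real^'d) \<Rightarrow> real^'n^'n" where
  "degree_matrix f x = (\<chi> i j. if i = j then (\<Sum>k\<in>UNIV. weight_matrix f x $ i $ k) else 0)"

definition graph_laplacian :: "(real \<Rightarrow> real) \<Rightarrow> ('n::finite \<Rightarrow> real^'d) \<Rightarrow> real^'n^'n" where
  "graph_laplacian f x = degree_matrix f x - weight_matrix f x"

definition real_eigenvalues :: "real^'n^'n \<Rightarrow> real set" where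
  "real_eigenvalues A = {c. \<exists>v. v \<noteq> 0 \<and> A *v v = c *\<^sub>R v}"

definition largest_eigenvalue :: "real^'n^'n \<Rightarrow> real" where
  "largest_eigenvalue A = Max (real_eigenvalues A)"

end

theory Submission
  imports Defs
begin

lemma quad_sum: "(w::real^'n::finite) \<bullet> (A *v v) = (\<Sum>i\<in>UNIV. \<Sum>j\<in>UNIV. w$i * A$i$j * v$j)"
  by (simp add: inner_vec_def matrix_vector_mult_def sum_distrib_left mult.assoc)

lemma sym_inner:
  assumes "\<And>i j. A$i$j = A$j$i"
  shows "(A *v u) \<bullet> (w::real^'n::finite) = u \<bullet> (A *v w)"
proof -
  have "(A *v u) \<bullet> w = w \<bullet> (A *v u)" by (simp add: inner_commute)
  also have "\<dots> = (\<Sum>i\<in>UNIV. \<Sum>j\<in>UNIV. w$i * A$i$j * u$j)" by (rule quad_sum)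
  also have "\<dots> = (\<Sum>j\<in>UNIV. \<Sum>i\<in>UNIV. w$i * A$i$j * u$j)" by (rule sum.swap)
  also have "\<dots> = (\<Sum>j\<in>UNIV. \<Sum>i\<in>UNIV. u$j * A$j$i * w$i)"
    using assms by (simp add: mult.commute mult.left_commute)
  also have "\<dots> = u \<bullet> (A *v w)" by (rule quad_sum[symmetric])
  finally show ?thesis .
qed

lemma finite_eig:
  assumes sym: "\<And>i j. A$i$j = A$j$i"
  shows "finite (real_eigenvalues (A::real^'n::finite^'n))"
proof -
  let ?S = "real_eigenvalues A"
  define v where "v = (\<lambda>c. SOME u. u \<noteq> 0 \<and> A *v u = c *\<^sub>R u)"
  have v: "v c \<noteq> 0 \<and> A *v v c = c *\<^sub>R v c" if "c \<in> ?S" for c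
    using that unfolding v_def real_eigenvalues_def by (metis (mono_tags, lifting) mem_Collect_eq someI_ex)
  have orth: "v c \<bullet> v d = 0" if "c \<in> ?S" "d \<in> ?S" "c \<noteq> d" for c d
  proof -
    have "c * (v c \<bullet> v d) = (A *v v c) \<bullet> v d" using v[OF that(1)] by simp
    also have "\<dots> = v c \<bullet> (A *v v d)" by (rule sym_inner[OF sym])
    also have "\<dots> = d * (v c \<bullet> v d)" using v[OF that(2)] by simp
    finally show ?thesis using that(3) by simp
  qed
  have inj: "inj_on v ?S"
  proof (rule inj_onI)
    fix c d assume "c \<in> ?S" "d \<in> ?S" "v c = v d"
    then show "c = d" using orth v by (metis inner_eq_zero_iff)
  qed
  have "pairwise orthogonal (v ` ?S)"
    unfolding pairwise_def orthogonal_def using orth by auto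
  moreover have "0 \<notin> v ` ?S" using v by auto
  ultimately have "independent (v ` ?S)" by (rule pairwise_orthogonal_independent)
  then have "finite (v ` ?S)" by (rule finiteI_independent)
  then show ?thesis using inj finite_image_iff by blast
qed


lemma quad_expand:
  fixes A :: "real^'n::finite^'n"
  assumes sym: "\<And>i j. A$i$j = A$j$i"
  shows "(v + t *\<^sub>R r) \<bullet> (A *v (v + t *\<^sub>R r)) = v \<bullet> (A *v v) + 2 * t * ((A *v v) \<bullet> r) + t^2 * (r \<bullet> (A *v r))"
proof -
  have "r \<bullet> (A *v v) = (A *v v) \<bullet> r" by (simp add: inner_commute)
  moreover have "v \<bullet> (A *v r) = (A *v v) \<bullet> r" using sym_inner[OF sym, of v r] by simp
  ultimately show ?thesis
    by (simp add: matrix_vector_right_distrib matrix_vector_mult_scaleR inner_add_left inner_add_right algebra_simps power2_eq_square)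
qed

lemma max_eig:
  assumes sym: "\<And>i j. A$i$j = A$j$i"
  shows "\<exists>M\<in>real_eigenvalues (A::real^'n::finite^'n). \<forall>w. w \<bullet> (A *v w) \<le> M * (w \<bullet> w)"
proof -
  let ?q = "\<lambda>w. w \<bullet> (A *v w)"
  have cont: "continuous_on (sphere 0 1) ?q"
    by (intro continuous_intros linear_continuous_on matrix_vector_mul_linear)
  have ne: "sphere (0::real^'n) 1 \<noteq> {}"
    by (metis norm_Basis ex_in_conv mem_sphere_0 nonempty_Basis)
  obtain v where v: "v \<in> sphere 0 1" and vmax: "\<And>w. w \<in> sphere 0 1 \<Longrightarrow> ?q w \<le> ?q v"
    using continuous_attains_sup[OF compact_sphere ne cont] by blast
  define M where "M = ?q v"
  have vv: "v \<bullet> v = 1" using v by (simp add: dot_square_norm)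
  have bound: "?q w \<le> M * (w \<bullet> w)" for w
  proof (cases "w = 0")
    case True then show ?thesis by simp
  next
    case False
    let ?u = "(1/norm w) *\<^sub>R w"
    have "?u \<in> sphere 0 1" using False by simp
    then have 1: "?q ?u \<le> M" unfolding M_def by (rule vmax)
    have 2: "?q ?u = ?q w / (norm w)^2"
      by (simp only: matrix_vector_mult_scaleR inner_scaleR_left inner_scaleR_right) (simp add: power2_eq_square)
    have 3: "w \<bullet> w = (norm w)^2" by (simp add: dot_square_norm)
    have 4: "(norm w)^2 > 0" using False by simp
    from 1 have "?q w / (norm w)^2 \<le> M" by (simp only: 2)
    then show ?thesis using 4 unfolding 3 by (simp add: divide_le_eq mult.commute)
  qed
  define r where "r = M *\<^sub>R v - A *v v"
  define K where "K = M * (r \<bullet> r) - ?q r"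
  have key: "0 \<le> - 2 * s * (r \<bullet> r) + s^2 * K" for s
  proof -
    define a where "a = (A *v v) \<bullet> r"
    define p where "p = v \<bullet> r"
    define rr where "rr = r \<bullet> r"
    define qr where "qr = ?q r"
    have Q: "?q (v + (-s) *\<^sub>R r) = M - 2 * s * a + s^2 * qr"
      using quad_expand[OF sym, of v "-s" r] unfolding M_def a_def qr_def by simp
    have N: "(v + (-s) *\<^sub>R r) \<bullet> (v + (-s) *\<^sub>R r) = 1 - 2 * s * p + s^2 * rr"
      using vv unfolding p_def rr_def
      by (simp add: inner_add_left inner_add_right power2_eq_square inner_commute[of r v] algebra_simps)
    have I: "M - 2 * s * a + s^2 * qr \<le> M * (1 - 2 * s * p + s^2 * rr)"
      using bound[of "v + (-s) *\<^sub>R r"] unfolding Q N .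
    have aeq: "a = M * p - rr"
      unfolding a_def p_def rr_def r_def by (simp add: inner_diff_right inner_diff_left inner_commute[of v "A *v v"])
    have E: "M * (1 - 2 * s * p + s^2 * rr) - (M - 2 * s * a + s^2 * qr) = - 2 * s * rr + s^2 * (M * rr - qr)"
      unfolding aeq by (simp add: algebra_simps)
    show ?thesis using I E unfolding K_def rr_def[symmetric] qr_def[symmetric] by linarith
  qed
  have "r = 0"
  proof (rule ccontr)
    assume "r \<noteq> 0"
    then have rp: "r \<bullet> r > 0" by simp
    define s where "s = (r \<bullet> r) / (\<bar>K\<bar> + 1)"
    have sp: "s > 0" using rp by (simp add: s_def)
    have "s^2 * K \<le> s * (s * \<bar>K\<bar>)" by (simp add: power2_eq_square mult_left_mono sp less_imp_le)
    also have "s * \<bar>K\<bar> < r \<bullet> r" unfolding s_def using rp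
      by (simp add: field_simps)
    then have "s * (s * \<bar>K\<bar>) < s * (r \<bullet> r)" using sp by simp
    finally have "s^2 * K < s * (r \<bullet> r)" .
    moreover have "s * (r \<bullet> r) > 0" using sp rp by simp
    ultimately show False using key[of s] by linarith
  qed
  then have "A *v v = M *\<^sub>R v" unfolding r_def by simp
  moreover have "v \<noteq> 0" using v by auto
  ultimately have "M \<in> real_eigenvalues A" unfolding real_eigenvalues_def by blast
  with bound show ?thesis by blast
qed


lemma lap_entry: "graph_laplacian f y $ i $ j =
   (if i = j then (\<Sum>k\<in>UNIV. weight_matrix f y $ i $ k) else 0) - weight_matrix f y $ i $ j"
  by (simp add: graph_laplacian_def degree_matrix_def)

lemma lap_rowsum: "(\<Sum>j\<in>UNIV. graph_laplacian f y $ i $ j) = 0"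
  by (simp add: lap_entry sum_subtractf)

lemma lap_sym: "graph_laplacian f (y::'n::finite \<Rightarrow> real^'d) $ i $ j = graph_laplacian f y $ j $ i"
  by (simp add: lap_entry weight_matrix_def norm_minus_commute)

lemma lap_ones: "graph_laplacian f y *v (\<chi> i. 1) = 0"
  by (simp add: matrix_vector_mult_def lap_rowsum vec_eq_iff)

lemma zero_eig: "(0::real) \<in> real_eigenvalues (graph_laplacian f (y::'n::finite \<Rightarrow> real^'d))"
  unfolding real_eigenvalues_def
  by (rule CollectI, rule exI[of _ "\<chi> i. 1"]) (simp add: lap_ones vec_eq_iff)

definition ediff :: "'n::finite \<Rightarrow> 'n \<Rightarrow> real^'n" where
  "ediff a b = (\<chi> i. (if i = a then 1 else 0) - (if i = b then 1 else 0))"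

lemma quad_diff:
  fixes A :: "real^'n::finite^'n"
  shows "ediff a b \<bullet> (A *v ediff a b) = A$a$a - A$a$b - A$b$a + A$b$b"
proof -
  have Ae: "A *v ediff a b = (\<chi> i. A$i$a - A$i$b)"
    unfolding ediff_def matrix_vector_mult_def
    by (simp add: vec_eq_iff right_diff_distrib sum_subtractf if_distrib[of "\<lambda>x. _ * x"] cong: if_cong)
  show ?thesis unfolding Ae unfolding ediff_def inner_vec_def
    by (simp add: left_diff_distrib sum_subtractf if_distrib[of "\<lambda>x. x * _"] cong: if_cong)
qed

lemma norm_diff_e:
  "ediff a b \<bullet> ediff a b = (if a = b then 0 else 2)"
  unfolding ediff_def inner_vec_def
  by (cases "a = b") (auto simp: algebra_simps sum_subtractf sum.distrib if_distrib[of "\<lambda>x. x * _"] if_distrib[of "\<lambda>x. _ * x"] cong: if_cong)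


lemma trace_bound:
  fixes A :: "real^'n::finite^'n"
  assumes rows: "\<And>i. (\<Sum>j\<in>UNIV. A$i$j) = 0"
    and M: "\<And>w. w \<bullet> (A *v w) \<le> M * (w \<bullet> w)"
  shows "(\<Sum>a\<in>UNIV. A$a$a) \<le> M * (real CARD('n) - 1)"
proof -
  let ?n = "real CARD('n)"
  have "(\<Sum>a\<in>UNIV. \<Sum>b\<in>UNIV. A$a$a - A$a$b - A$b$a + A$b$b) \<le> (\<Sum>a\<in>UNIV. \<Sum>b\<in>UNIV. M * (if a = (b::'n) then 0 else 2))"
  proof (rule sum_mono, rule sum_mono)
    fix a b
    show "A$a$a - A$a$b - A$b$a + A$b$b \<le> M * (if a = b then 0 else 2)"
      using M[of "ediff a b"] unfolding quad_diff norm_diff_e .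
  qed
  moreover have "(\<Sum>a\<in>UNIV. \<Sum>b\<in>UNIV. A$a$a - A$a$b - A$b$a + A$b$b) = 2 * ?n * (\<Sum>a\<in>UNIV. A$a$a)"
  proof -
    have "(\<Sum>a\<in>UNIV. \<Sum>b\<in>UNIV. A$a$a - A$a$b - A$b$a + A$b$b)
        = (\<Sum>a\<in>UNIV. ?n * A$a$a) - (\<Sum>a\<in>UNIV. \<Sum>b\<in>UNIV. A$a$b) - (\<Sum>a\<in>UNIV. \<Sum>b\<in>UNIV. A$b$a) + (\<Sum>a::'n\<in>UNIV. \<Sum>b\<in>UNIV. A$b$b)"
      by (simp add: sum.distrib sum_subtractf)
    also have "(\<Sum>a\<in>UNIV. \<Sum>b\<in>UNIV. A$b$a) = (\<Sum>b\<in>UNIV. \<Sum>a\<in>UNIV. A$b$a)" by (rule sum.swap)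
    finally show ?thesis using rows by (simp add: sum_distrib_left[symmetric])
  qed
  moreover have "(\<Sum>a\<in>UNIV. \<Sum>b\<in>UNIV. M * (if a = (b::'n) then 0 else 2)) = M * 2 * ?n * (?n - 1)"
  proof -
    have "\<And>a. (\<Sum>b\<in>UNIV. (if a = (b::'n) then 0 else 2::real)) = 2 * ?n - 2"
    proof -
      fix a
      have "(\<Sum>b\<in>UNIV. (if a = (b::'n) then 0 else 2::real)) = (\<Sum>b\<in>UNIV. 2 - (if a = b then 2 else 0))"
        by (intro sum.cong) auto
      then show "(\<Sum>b\<in>UNIV. (if a = (b::'n) then 0 else 2::real)) = 2 * ?n - 2"
        by (simp add: sum_subtractf)
    qed
    then have XA: "(\<Sum>a::'n\<in>UNIV. \<Sum>b\<in>UNIV. (if a = b then 0 else 2::real)) = ?n * (2 * ?n - 2)"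
      by simp
    have XB: "(\<Sum>a::'n\<in>UNIV. \<Sum>b\<in>UNIV. M * (if a = b then 0 else 2)) = M * (\<Sum>a::'n\<in>UNIV. \<Sum>b\<in>UNIV. (if a = b then 0 else 2::real))"
      by (simp add: sum_distrib_left)
    show ?thesis by (simp only: XB XA) (simp add: algebra_simps)
  qed
  ultimately have "2 * ?n * (\<Sum>a\<in>UNIV. A$a$a) \<le> 2 * ?n * (M * (?n - 1))" by (simp add: algebra_simps)
  moreover have "2 * ?n > 0" by simp
  ultimately show ?thesis by (simp add: mult_le_cancel_left_pos)
qed


lemma tangent:
  fixes f :: "real \<Rightarrow> real"
  assumes f_diff: "f differentiable_on {0<..4}"
    and f_decr: "\<And>a b. 0 < a \<Longrightarrow> a \<le> b \<Longrightarrow> b \<le> 4 \<Longrightarrow> f b \<le> f a"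
    and f_conv: "convex_on {0<..4} f"
    and d0: "0 < d0" "d0 < 4"
  shows "\<exists>g\<le>0. \<forall>d\<in>{0<..4}. f d0 + g * (d - d0) \<le> f d"
proof -
  have "f differentiable at d0 within {0<..4}" using f_diff d0 unfolding differentiable_on_def by auto
  then obtain g where g: "(f has_real_derivative g) (at d0 within {0<..4})"
    unfolding real_differentiable_def by blast
  have tan: "f d - f d0 \<ge> g * (d - d0)" if "d \<in> {0<..4}" for d
    by (rule convex_on_imp_above_tangent[OF f_conv]) (use d0 that g in auto)
  have "g * (4 - d0) \<le> 0" using tan[of 4] f_decr[of d0 4] d0 by auto
  then have "g \<le> 0" using d0 by (simp add: mult_le_0_iff)
  moreover have "\<forall>d\<in>{0<..4}. f d0 + g * (d - d0) \<le> f d"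
  proof
    fix d assume "d \<in> {0<..4::real}"
    from tan[OF this] show "f d0 + g * (d - d0) \<le> f d" by linarith
  qed
  ultimately show ?thesis by blast
qed

lemma simplex_eigs:
  fixes x :: "'n::finite \<Rightarrow> real^'d"
  assumes W: "\<And>i j. i \<noteq> j \<Longrightarrow> weight_matrix f x $ i $ j = c"
  shows "real_eigenvalues (graph_laplacian f x) \<subseteq> {0, real CARD('n) * c}"
proof
  let ?n = "real CARD('n)"
  let ?L = "graph_laplacian f x"
  have Wd: "weight_matrix f x $ i $ j = (if i = j then 0 else c)" for i j
    using W by (simp add: weight_matrix_def)
  have rs: "(\<Sum>k\<in>UNIV. weight_matrix f x $ i $ k) = ?n * c - c" for i
  proof -
    have "(\<Sum>k\<in>UNIV. weight_matrix f x $ i $ k) = (\<Sum>k\<in>UNIV. c - (if i = k then c else 0))"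
      unfolding Wd by (intro sum.cong) auto
    then show ?thesis by (simp add: sum_subtractf)
  qed
  have Le: "?L $ i $ j = (if i = j then ?n * c else 0) - c" for i j
    unfolding lap_entry rs Wd by auto
  have Lv: "(?L *v v) $ i = ?n * c * v $ i - c * (\<Sum>j\<in>UNIV. v $ j)" for v i
    unfolding matrix_vector_mult_def Le
    by (simp add: left_diff_distrib sum_subtractf if_distrib[of "\<lambda>x. x * _"] sum_distrib_left cong: if_cong)
  fix \<mu> assume "\<mu> \<in> real_eigenvalues ?L"
  then obtain v where v0: "v \<noteq> 0" and ev: "?L *v v = \<mu> *\<^sub>R v"
    unfolding real_eigenvalues_def by blast
  let ?s = "\<Sum>j\<in>UNIV. v $ j"
  have comp: "\<mu> * v $ i = ?n * c * v $ i - c * ?s" for i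
  proof -
    have "(?L *v v) $ i = (\<mu> *\<^sub>R v) $ i" using ev by simp
    then show ?thesis unfolding Lv by simp
  qed
  have "\<mu> * ?s = (\<Sum>i\<in>UNIV. ?n * c * v $ i - c * ?s)"
    by (simp add: sum_distrib_left comp)
  also have "\<dots> = 0" by (simp add: sum_subtractf sum_distrib_left[symmetric])
  finally have "\<mu> = 0 \<or> ?s = 0" by simp
  moreover obtain i where "v $ i \<noteq> 0" using v0 by (auto simp: vec_eq_iff)
  ultimately show "\<mu> \<in> {0, ?n * c}" using comp[of i] by auto
qed


lemma sum_offdiag: "(\<Sum>a::'n::finite\<in>UNIV. \<Sum>k\<in>UNIV. if a = k then 0 else e) = real CARD('n) * (real CARD('n) - 1) * (e::real)"
proof -
  have "(\<Sum>k\<in>UNIV. if a = k then 0 else e) = real CARD('n) * e - e" for a :: 'n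
  proof -
    have "(\<Sum>k\<in>UNIV. if a = k then 0 else e) = (\<Sum>k\<in>UNIV. e - (if a = k then e else 0))"
      by (intro sum.cong) auto
    then show ?thesis by (simp add: sum_subtractf)
  qed
  then have "(\<Sum>a::'n::finite\<in>UNIV. \<Sum>k\<in>UNIV. if a = k then 0 else e) = (\<Sum>a::'n\<in>UNIV. real CARD('n) * e - e)"
    by simp
  also have "\<dots> = real CARD('n) * (real CARD('n) * e - e)" by simp
  finally show ?thesis by (simp add: algebra_simps)
qed

lemma sum_dist_sq:
  fixes y :: "'n::finite \<Rightarrow> real^'d"
  assumes "\<And>i. norm (y i) = 1"
  shows "(\<Sum>a\<in>UNIV. \<Sum>k\<in>UNIV. (norm (y a - y k))^2) \<le> 2 * (real CARD('n))^2"
proof -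
  have e: "(norm (y a - y k))^2 = 2 - 2 * (y a \<bullet> y k)" for a k
  proof -
    have "y a \<bullet> y a = 1" "y k \<bullet> y k = 1" using assms[of a] assms[of k] by (simp_all add: dot_square_norm)
    then show ?thesis unfolding power2_norm_eq_inner
      by (simp add: inner_diff_left inner_diff_right inner_commute[of "y k" "y a"])
  qed
  have "(\<Sum>a\<in>UNIV. \<Sum>k\<in>UNIV. y a \<bullet> y k) = (\<Sum>a\<in>UNIV. y a) \<bullet> (\<Sum>k\<in>UNIV. y k)"
    by (simp add: inner_sum_left inner_sum_right) (rule sum.swap)
  then have "(\<Sum>a\<in>UNIV. \<Sum>k\<in>UNIV. y a \<bullet> y k) \<ge> 0" by simp
  moreover have "(\<Sum>a\<in>UNIV. \<Sum>k\<in>UNIV. (norm (y a - y k))^2) = 2 * (real CARD('n))^2 - 2 * (\<Sum>a\<in>UNIV. \<Sum>k\<in>UNIV. y a \<bullet> y k)"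
    unfolding e by (simp add: sum_subtractf sum_distrib_left power2_eq_square)
  ultimately show ?thesis by linarith
qed


theorem proposition3p3:
  fixes f :: "real \<Rightarrow> real"
    and x :: "'n::finite \<Rightarrow> real^'d"
  assumes n3: "CARD('n) \<ge> 3"
    and dim: "CARD('d) = CARD('n) - 1"
    and f_diff: "f differentiable_on {0<..4}"
    and f_decr: "\<And>a b. 0 < a \<Longrightarrow> a \<le> b \<Longrightarrow> b \<le> 4 \<Longrightarrow> f b \<le> f a"
    and f_conv: "convex_on {0<..4} f"
    and x_sphere: "\<And>i. norm (x i) = 1"
    and x_simplex: "\<And>i j. i \<noteq> j \<Longrightarrow> x i \<bullet> x j = - 1 / (real CARD('n) - 1)"
  shows "\<forall>y :: 'n \<Rightarrow> real^'d. (\<forall>i. norm (y i) = 1) \<and> inj y \<longrightarrow>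
           largest_eigenvalue (graph_laplacian f x) \<le> largest_eigenvalue (graph_laplacian f y)"
proof (intro allI impI, elim conjE)
  fix y :: "'n \<Rightarrow> real^'d"
  assume y_sphere: "\<forall>i. norm (y i) = 1" and y_inj: "inj y"
  define n where "n = real CARD('n)"
  have n3': "n \<ge> 3" using n3 unfolding n_def by simp
  define d0 where "d0 = 2 * n / (n - 1)"
  define c where "c = f d0"
  have d0pos: "0 < d0" and d04: "d0 < 4" using n3' unfolding d0_def by (auto simp: field_simps)
  have d0n: "n * (n - 1) * d0 = 2 * n^2" using n3' unfolding d0_def by (simp add: field_simps power2_eq_square)
  have xd: "(norm (x i - x j))^2 = d0" if "i \<noteq> j" for i j
  proof -
    have "x i \<bullet> x i = 1" "x j \<bullet> x j = 1" using x_sphere[of i] x_sphere[of j] by (simp_all add: dot_square_norm)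
    then have "(norm (x i - x j))^2 = 2 - 2 * (x i \<bullet> x j)" unfolding power2_norm_eq_inner
      by (simp add: inner_diff_left inner_diff_right inner_commute[of "x j" "x i"])
    also have "\<dots> = d0" unfolding x_simplex[OF that] d0_def n_def[symmetric] using n3'
      by (simp add: field_simps)
    finally show ?thesis .
  qed
  have Sx: "real_eigenvalues (graph_laplacian f x) \<subseteq> {0, n * c}"
    unfolding n_def by (rule simplex_eigs) (simp add: weight_matrix_def xd c_def)
  have "largest_eigenvalue (graph_laplacian f x) \<le> max 0 (n * c)"
    unfolding largest_eigenvalue_def
    using Sx zero_eig[of f x] finite_subset[OF Sx] by (subst Max_le_iff) auto
  let ?L = "graph_laplacian f y"
  let ?W = "weight_matrix f y"
  have finS: "finite (real_eigenvalues ?L)" by (rule finite_eig) (rule lap_sym)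
  obtain M where M: "M \<in> real_eigenvalues ?L" and Mq: "\<And>w. w \<bullet> (?L *v w) \<le> M * (w \<bullet> w)"
    using max_eig[of ?L] lap_sym[of f y] by blast
  have tr: "(\<Sum>a\<in>UNIV. ?L$a$a) \<le> M * (n - 1)"
    unfolding n_def by (rule trace_bound) (auto simp: lap_rowsum Mq)
  have trW: "(\<Sum>a\<in>UNIV. ?L$a$a) = (\<Sum>a\<in>UNIV. \<Sum>k\<in>UNIV. ?W$a$k)"
    by (simp add: lap_entry weight_matrix_def)
  obtain g where g0: "g \<le> 0" and gt: "\<And>d. d \<in> {0<..4} \<Longrightarrow> f d0 + g * (d - d0) \<le> f d"
    using tangent[OF f_diff f_decr f_conv d0pos d04] by blast
  let ?d = "\<lambda>a k. (norm (y a - y k))^2"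
  have Wlow: "(if a = k then 0 else c - g * d0) + g * ?d a k \<le> ?W$a$k" for a k
  proof (cases "a = k")
    case True then show ?thesis by (simp add: weight_matrix_def)
  next
    case False
    then have "y a \<noteq> y k" using y_inj by (auto dest: injD)
    then have pos: "0 < ?d a k" by simp
    have "norm (y a - y k) \<le> 2" using norm_triangle_ineq4[of "y a" "y k"] y_sphere by simp
    then have "?d a k \<le> 4" using power_mono[of "norm (y a - y k)" 2 2] by simp
    with pos have "f d0 + g * (?d a k - d0) \<le> f (?d a k)" by (intro gt) auto
    then show ?thesis using False by (simp add: weight_matrix_def c_def algebra_simps)
  qed
  have "(\<Sum>a\<in>UNIV. \<Sum>k\<in>UNIV. (if a = k then 0 else c - g * d0) + g * ?d a k) \<le> (\<Sum>a\<in>UNIV. \<Sum>k\<in>UNIV. ?W$a$k)"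
    by (intro sum_mono) (rule Wlow)
  moreover have "(\<Sum>a\<in>UNIV. \<Sum>k\<in>UNIV. (if a = k then 0 else c - g * d0) + g * ?d a k)
      = n * (n - 1) * c - g * (n * (n - 1) * d0) + g * (\<Sum>a\<in>UNIV. \<Sum>k\<in>UNIV. ?d a k)"
  proof -
    have "(\<Sum>a\<in>UNIV. \<Sum>k\<in>UNIV. (if a = k then 0 else c - g * d0) + g * ?d a k)
      = n * (n - 1) * (c - g * d0) + g * (\<Sum>a\<in>UNIV. \<Sum>k\<in>UNIV. ?d a k)"
      unfolding n_def by (simp add: sum.distrib sum_offdiag sum_distrib_left)
    then show ?thesis by (simp add: algebra_simps)
  qed
  moreover have "g * (\<Sum>a\<in>UNIV. \<Sum>k\<in>UNIV. ?d a k) \<ge> g * (2 * n^2)"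
    using sum_dist_sq[of y] y_sphere g0 unfolding n_def by (intro mult_left_mono_neg) auto
  moreover have "g * (n * (n - 1) * d0) = g * (2 * n^2)" using d0n by simp
  ultimately have "n * (n - 1) * c \<le> M * (n - 1)"
    using tr trW by linarith
  then have Mc: "n * c \<le> M" using n3' by (simp add: mult.commute mult.left_commute)
  have "max 0 (n * c) \<le> largest_eigenvalue ?L"
    unfolding largest_eigenvalue_def using Mc M zero_eig[of f y] finS
    by (simp add: Max_ge_iff) (meson Max_ge dual_order.trans)
  with \<open>largest_eigenvalue (graph_laplacian f x) \<le> max 0 (n * c)\<close>
  show "largest_eigenvalue (graph_laplacian f x) \<le> largest_eigenvalue ?L" by linarith
qed

end
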